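(* Let $\mathbf A,\mathbf B\in\mathsf{ICM}$. Every ring homomorphism $h:\mathbf A^-\to\mathbf B^-$ is also a homomorphism $h:\mathbf A\to\mathbf B$ of implicitly closed meadows, i.e. it also satisfies $h(a^* )=h(a)^*$ and $h(r_p(a))=r_p(h(a))$ for all $a\in A$ and all primes $p$.
   Context: A field is weakly rooted if it has characteristic $0$, or prime characteristic $p$ with every element having a $p$-th root. Weak inverse: $a^*=a^{-1}$ if $a\ne0$, $0^*=0$; weak $p$-root: $r_p(a)=\sqrt[p]{a}$ if the characteristic is $p$, else $0$. An implicitly closed field is a weakly rooted field (ring language $\{+,\cdot,-,0,1\}$) expanded by $(\,)^*$ and all $r_p$; $\mathsf{ICM}$ is the class of algebras isomorphic to subalgebras of direct products of implicitly closed fields. $\mathbf A^-$ denotes the ring reduct of $\mathbf A$. *)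

theory Defs
  imports "HOL-Algebra.Ring" "HOL-Algebra.RingHom" "HOL-Computational_Algebra.Primes"
begin

text \<open>Algebras in the signature of implicitly closed meadows:
  the ring operations (HOL-Algebra ring record: carrier, mult, one, zero, add;
  negation is the additive inverse), the weak inverse and the weak p-roots
  (one operation rt p for every prime p).\<close>
record 'a icm_alg = "'a ring" +
  winv :: "'a \<Rightarrow> 'a"
  rt   :: "nat \<Rightarrow> 'a \<Rightarrow> 'a"

definition alg_char :: "('a, 'm) ring_scheme \<Rightarrow> nat" where
  "alg_char R = (if \<exists>n::nat>0. add_pow R n \<one>\<^bsub>R\<^esub> = \<zero>\<^bsub>R\<^esub>
                  then (LEAST n::nat. n > 0 \<and> add_pow R n \<one>\<^bsub>R\<^esub> = \<zero>\<^bsub>R\<^esub>) else 0)"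

definition weakly_rooted :: "('a, 'm) ring_scheme \<Rightarrow> bool" where
  "weakly_rooted F \<longleftrightarrow> field F \<and>
     (alg_char F = 0 \<or>
      (prime (alg_char F) \<and>
       (\<forall>a\<in>carrier F. \<exists>b\<in>carrier F. b [^]\<^bsub>F\<^esub> (alg_char F) = a)))"

definition implicitly_closed_field :: "'a icm_alg \<Rightarrow> bool" where
  "implicitly_closed_field F \<longleftrightarrow> weakly_rooted F \<and>
     (\<forall>a\<in>carrier F. winv F a = (if a = \<zero>\<^bsub>F\<^esub> then \<zero>\<^bsub>F\<^esub> else inv\<^bsub>F\<^esub> a)) \<and>
     (\<forall>p. prime p \<longrightarrow> (\<forall>a\<in>carrier F.
        rt F p a \<in> carrier F \<and>
        (if alg_char F = p then rt F p a [^]\<^bsub>F\<^esub> p = a else rt F p a = \<zero>\<^bsub>F\<^esub>)))"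

definition prod_alg :: "'i set \<Rightarrow> ('i \<Rightarrow> 'c icm_alg) \<Rightarrow> ('i \<Rightarrow> 'c) icm_alg" where
  "prod_alg I F =
     \<lparr> carrier = (\<Pi>\<^sub>E i\<in>I. carrier (F i)),
       monoid.mult = (\<lambda>f g. \<lambda>i\<in>I. f i \<otimes>\<^bsub>F i\<^esub> g i),
       one = (\<lambda>i\<in>I. \<one>\<^bsub>F i\<^esub>),
       zero = (\<lambda>i\<in>I. \<zero>\<^bsub>F i\<^esub>),
       add = (\<lambda>f g. \<lambda>i\<in>I. f i \<oplus>\<^bsub>F i\<^esub> g i),
       winv = (\<lambda>f. \<lambda>i\<in>I. winv (F i) (f i)),
       rt = (\<lambda>p f. \<lambda>i\<in>I. rt (F i) p (f i)) \<rparr>"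

definition icm_algebra :: "'a icm_alg \<Rightarrow> bool" where
  "icm_algebra A \<longleftrightarrow>
     \<one>\<^bsub>A\<^esub> \<in> carrier A \<and> \<zero>\<^bsub>A\<^esub> \<in> carrier A \<and>
     (\<forall>a\<in>carrier A. \<forall>b\<in>carrier A. a \<oplus>\<^bsub>A\<^esub> b \<in> carrier A \<and> a \<otimes>\<^bsub>A\<^esub> b \<in> carrier A) \<and>
     (\<forall>a\<in>carrier A. \<exists>b\<in>carrier A. a \<oplus>\<^bsub>A\<^esub> b = \<zero>\<^bsub>A\<^esub>) \<and>
     (\<forall>a\<in>carrier A. winv A a \<in> carrier A) \<and>
     (\<forall>p. prime p \<longrightarrow> (\<forall>a\<in>carrier A. rt A p a \<in> carrier A))"

definition icm_hom :: "'a icm_alg \<Rightarrow> 'b icm_alg \<Rightarrow> ('a \<Rightarrow> 'b) set" where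
  "icm_hom A B = {h. h \<in> ring_hom A B \<and> h \<zero>\<^bsub>A\<^esub> = \<zero>\<^bsub>B\<^esub> \<and>
      (\<forall>a\<in>carrier A. h (winv A a) = winv B (h a)) \<and>
      (\<forall>p. prime p \<longrightarrow> (\<forall>a\<in>carrier A. h (rt A p a) = rt B p (h a)))}"

text \<open>ICM: algebras isomorphic to a subalgebra of a direct product of implicitly closed
  fields, i.e. algebras with an injective homomorphism into such a product.  Since HOL
  cannot quantify over types inside a formula, the index type 'i and the carrier type 'c
  of the fields are given as explicit type parameters.\<close>
definition ICM :: "'i itself \<Rightarrow> 'c itself \<Rightarrow> 'a icm_alg \<Rightarrow> bool" where
  "ICM _ _ A \<longleftrightarrow> icm_algebra A \<and>
     (\<exists>(I :: 'i set) (F :: 'i \<Rightarrow> 'c icm_alg) e.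
        (\<forall>i\<in>I. implicitly_closed_field (F i)) \<and>
        e \<in> icm_hom A (prod_alg I F) \<and> inj_on e (carrier A))"

end

theory Submission
  imports Defs
begin


fun psum :: "('a,'m) ring_scheme \<Rightarrow> (nat \<Rightarrow> 'a) \<Rightarrow> nat \<Rightarrow> 'a" where
  "psum R f 0 = \<zero>\<^bsub>R\<^esub>"
| "psum R f (Suc k) = psum R f k \<oplus>\<^bsub>R\<^esub> f k"

context cring begin

lemma psum_closed: "(\<And>k. f k \<in> carrier R) \<Longrightarrow> psum R f m \<in> carrier R"
  by (induction m) auto

lemma psum_add: "(\<And>k. f k \<in> carrier R) \<Longrightarrow> (\<And>k. g k \<in> carrier R) \<Longrightarrow>
   psum R (\<lambda>k. f k \<oplus> g k) m = psum R f m \<oplus> psum R g m"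
  by (induction m) (auto simp: psum_closed a_ac)

lemma psum_rmult: "(\<And>k. f k \<in> carrier R) \<Longrightarrow> w \<in> carrier R \<Longrightarrow>
   psum R (\<lambda>k. f k \<otimes> w) m = psum R f m \<otimes> w"
  by (induction m) (auto simp: psum_closed l_distr)

lemma psum_shift: "(\<And>k. f k \<in> carrier R) \<Longrightarrow>
   psum R f (Suc m) = f 0 \<oplus> psum R (\<lambda>k. f (Suc k)) m"
  by (induction m) (auto simp: psum_closed a_ac)

lemma psum_zero: "(\<And>k. k < m \<Longrightarrow> f k = \<zero>) \<Longrightarrow> psum R f m = \<zero>"
  by (induction m) auto

lemma binom1:
  assumes w: "w \<in> carrier R"
  shows "(\<one> \<oplus> w) [^] n = psum R (\<lambda>k. [(n choose k)] \<cdot> (w [^] k)) (Suc n)"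
proof (induction n)
  case 0
  then show ?case by simp
next
  case (Suc n)
  define T where "T = (\<lambda>n k. [(n choose k)] \<cdot> (w [^] k))"
  have Tc: "\<And>n k. T n k \<in> carrier R" unfolding T_def using w by simp
  have T0: "\<And>n. T n 0 = \<one>" unfolding T_def by simp
  have TS: "T (Suc n) (Suc k) = T n k \<otimes> w \<oplus> T n (Suc k)" for k
  proof -
    have "T (Suc n) (Suc k) = [(n choose k)] \<cdot> (w [^] k \<otimes> w) \<oplus> [(n choose Suc k)] \<cdot> (w [^] Suc k)"
      unfolding T_def using w by (simp add: add.nat_pow_mult)
    also have "[(n choose k)] \<cdot> (w [^] k \<otimes> w) = T n k \<otimes> w"
      unfolding T_def using w by (simp add: add_pow_ldistr)
    finally show ?thesis unfolding T_def by simp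
  qed
  define S where "S = psum R (T n) (Suc n)"
  define P where "P = psum R (\<lambda>k. T n (Suc k)) (Suc n)"
  have Sc: "S \<in> carrier R" unfolding S_def by (rule psum_closed[OF Tc])
  have Pc: "P \<in> carrier R" unfolding P_def by (rule psum_closed[OF Tc])
  have "psum R (T n) (Suc (Suc n)) = S"
    unfolding S_def T_def using w by (simp add: binomial_eq_0 psum_closed)
  moreover have "psum R (T n) (Suc (Suc n)) = \<one> \<oplus> P"
    unfolding P_def using psum_shift[of "T n" "Suc n"] Tc T0 by simp
  ultimately have SP: "S = \<one> \<oplus> P" by simp
  have e1: "psum R (\<lambda>k. T n k \<otimes> w \<oplus> T n (Suc k)) (Suc n) = psum R (\<lambda>k. T n k \<otimes> w) (Suc n) \<oplus> P"
    unfolding P_def by (rule psum_add) (use Tc w in auto)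
  have e2: "psum R (\<lambda>k. T n k \<otimes> w) (Suc n) = S \<otimes> w" unfolding S_def by (rule psum_rmult[OF Tc w])
  have "psum R (T (Suc n)) (Suc (Suc n)) = \<one> \<oplus> psum R (\<lambda>k. T n k \<otimes> w \<oplus> T n (Suc k)) (Suc n)"
    using psum_shift[of "T (Suc n)" "Suc n"] Tc T0 TS by simp
  also have "\<dots> = \<one> \<oplus> (S \<otimes> w \<oplus> P)"
    by (simp only: e1 e2)
  also have "\<dots> = S \<otimes> (\<one> \<oplus> w)"
    using SP Sc Pc w by (simp add: r_distr a_ac)
  finally show ?case using Suc.IH unfolding S_def T_def using w by simp
qed

lemma frob1:
  assumes w: "w \<in> carrier R" and p: "prime (p::nat)" and c: "[p] \<cdot> \<one> = \<zero>"
  shows "(\<one> \<oplus> w) [^] p = \<one> \<oplus> w [^] p"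
proof -
  define T where "T = (\<lambda>k. [(p choose k)] \<cdot> (w [^] k))"
  have Tc: "\<And>k. T k \<in> carrier R" unfolding T_def using w by simp
  have p0: "p = Suc (p - 1)" using p prime_gt_0_nat by simp
  have mid: "T (Suc k) = \<zero>" if "k < p - 1" for k
  proof -
    have "p dvd (p choose Suc k)" using dvd_choose_prime[of "Suc k" p] that p by simp
    then obtain q where q: "p choose Suc k = p * q" by (auto elim: dvdE)
    have px: "[p] \<cdot> x = \<zero>" if "x \<in> carrier R" for x
      using add_pow_ldistr[of \<one> x p] c that by simp
    have wc: "w [^] Suc k \<in> carrier R" using w by simp
    show ?thesis
      unfolding T_def q using add.nat_pow_pow[OF wc, of q p] px[OF wc] by simp
  qed
  have "(\<one> \<oplus> w) [^] p = psum R T (Suc p)" unfolding T_def by (rule binom1[OF w])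
  also have "\<dots> = psum R T p \<oplus> w [^] p" unfolding T_def using w by simp
  also have "psum R T p = \<one>"
    using psum_shift[of T "p - 1"] Tc p0 psum_zero[of "p - 1" "\<lambda>k. T (Suc k)"] mid
    by (simp add: T_def)
  finally show ?thesis .
qed

end



context domain begin
lemma pow_eq_zero: "x \<in> carrier R \<Longrightarrow> x [^] (n::nat) = \<zero> \<Longrightarrow> x = \<zero>"
proof (induction n)
  case 0 then show ?case by simp
next
  case (Suc n)
  then have "x [^] n = \<zero> \<or> x = \<zero>" by (simp add: integral_iff)
  then show ?case using Suc by blast
qed
end

context field begin
lemma frob_inj:
  assumes p: "prime (p::nat)" and c: "[p] \<cdot> \<one> = \<zero>"
    and x: "x \<in> carrier R" and y: "y \<in> carrier R" and e: "x [^] p = y [^] p"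
  shows "x = y"
proof (cases "y = \<zero>")
  case True
  have "p \<noteq> 0" using p by auto
  then have "x [^] p = \<zero>" using e True nat_pow_zero by metis
  then show ?thesis using pow_eq_zero x True by blast
next
  case False
  then have yU: "y \<in> Units R" using y field_Units by simp
  define yi where "yi = inv y"
  have yi: "yi \<in> carrier R" "y \<otimes> yi = \<one>" "yi \<otimes> y = \<one>" using yU unfolding yi_def by auto
  define z where "z = x \<otimes> yi"
  have zc: "z \<in> carrier R" using x yi unfolding z_def by simp
  have "z [^] p = y [^] p \<otimes> yi [^] p" unfolding z_def using x yi e by (simp add: nat_pow_distrib)
  also have "\<dots> = (y \<otimes> yi) [^] p" by (rule nat_pow_distrib[symmetric]) (use y yi in auto)
  finally have zp: "z [^] p = \<one>" using yi by simp
  define w where "w = z \<ominus> \<one>"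
  have wc: "w \<in> carrier R" using zc unfolding w_def by simp
  have zw: "z = \<one> \<oplus> w" using zc unfolding w_def by (simp add: a_minus_def a_ac r_neg)
  have "\<one> \<oplus> w [^] p = \<one> \<oplus> \<zero>" using frob1[OF wc p c] zp zw by simp
  then have "w [^] p = \<zero>" using wc by (metis add.l_cancel_one' nat_pow_closed one_closed r_zero)
  then have "w = \<zero>" using pow_eq_zero wc by blast
  then have "z = \<one>" using zw by simp
  have "x = x \<otimes> yi \<otimes> y" using x y yi by (simp add: m_assoc)
  then have "x = z \<otimes> y" unfolding z_def .
  then show ?thesis using \<open>z = \<one>\<close> y by simp
qed
end

lemma wr_field: "weakly_rooted F \<Longrightarrow> field F"
  unfolding weakly_rooted_def by simp

context field begin
lemma char_iff:
  assumes wr: "weakly_rooted R" and p: "prime (p::nat)"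
  shows "alg_char R = p \<longleftrightarrow> [p] \<cdot> \<one> = \<zero>"
proof
    assume a: "alg_char R = p"
    have ex: "\<exists>n::nat>0. [n] \<cdot> \<one> = \<zero>"
    proof (rule ccontr)
      assume na: "\<not> (\<exists>n::nat>0. [n] \<cdot> \<one> = \<zero>)"
      have "alg_char R = 0" unfolding alg_char_def by (rule if_not_P[OF na])
      then show False using a p by simp
    qed
    then have "alg_char R = (LEAST n::nat. n > 0 \<and> [n] \<cdot> \<one> = \<zero>)" unfolding alg_char_def by simp
    then show "[p] \<cdot> \<one> = \<zero>" using LeastI_ex[OF ex] a by simp
  next
    assume b: "[p] \<cdot> \<one> = \<zero>"
    have ex: "\<exists>n::nat>0. [n] \<cdot> \<one> = \<zero>" using b p prime_gt_0_nat by blast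
    define q where "q = alg_char R"
    have qL: "q = (LEAST n::nat. n > 0 \<and> [n] \<cdot> \<one> = \<zero>)" using ex unfolding q_def alg_char_def by simp
    have q: "q > 0" "[q] \<cdot> \<one> = \<zero>" using LeastI_ex[OF ex] qL by auto
    have "prime q" using wr q unfolding weakly_rooted_def q_def by auto
    show "alg_char R = p"
    proof (rule ccontr)
      assume "alg_char R \<noteq> p"
      then have "q \<noteq> p" unfolding q_def .
      then have "coprime p q" using p \<open>prime q\<close> by (simp add: primes_coprime)
      then have g: "gcd p q = 1" by simp
      obtain x y where xy: "p * x = q * y + 1" using bezout_nat[of p q] g p prime_gt_0_nat by auto
      have "[(p * x)] \<cdot> \<one> = [x] \<cdot> ([p] \<cdot> \<one>)" using add.nat_pow_pow[of "\<one>" x p] by simp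
      also have "\<dots> = \<zero>" using b by simp
      finally have l: "[(p * x)] \<cdot> \<one> = \<zero>" .
      have "[(q * y + 1)] \<cdot> \<one> = [(q*y)] \<cdot> \<one> \<oplus> [(1::nat)] \<cdot> \<one>"
        using add.nat_pow_mult[of "\<one>" "q*y" 1] by simp
      also have "[(q*y)] \<cdot> \<one> = [y] \<cdot> ([q] \<cdot> \<one>)" using add.nat_pow_pow[of "\<one>" y q] by simp
      also have "\<dots> = \<zero>" using q by simp
      finally have "[(q * y + 1)] \<cdot> \<one> = \<one>" by simp
      then show False using l xy by simp
    qed
qed

end

definition cp :: "('a, 'm) ring_scheme \<Rightarrow> ('a \<Rightarrow> 'a) \<Rightarrow> nat \<Rightarrow> 'a" where
  "cp K wi p = add_pow K p \<one>\<^bsub>K\<^esub> \<otimes>\<^bsub>K\<^esub> wi (add_pow K p \<one>\<^bsub>K\<^esub>)"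

lemma icf_wr: "implicitly_closed_field K \<Longrightarrow> weakly_rooted K"
  unfolding implicitly_closed_field_def by simp

lemma icf_field: "implicitly_closed_field K \<Longrightarrow> field K"
  using icf_wr wr_field by blast

lemma icf_winv: "implicitly_closed_field K \<Longrightarrow> a \<in> carrier K \<Longrightarrow>
    winv K a = (if a = \<zero>\<^bsub>K\<^esub> then \<zero>\<^bsub>K\<^esub> else inv\<^bsub>K\<^esub> a)"
  unfolding implicitly_closed_field_def by simp

lemma icf_rt: "implicitly_closed_field K \<Longrightarrow> prime p \<Longrightarrow> a \<in> carrier K \<Longrightarrow>
    rt K p a \<in> carrier K \<and> (if alg_char K = p then rt K p a [^]\<^bsub>K\<^esub> p = a else rt K p a = \<zero>\<^bsub>K\<^esub>)"
  unfolding implicitly_closed_field_def by blast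


locale icfl = field R for R :: "'a icm_alg" (structure) +
  assumes icf: "implicitly_closed_field R"
begin

lemma winv_eq: "a \<in> carrier R \<Longrightarrow> winv R a = (if a = \<zero> then \<zero> else inv a)"
  using icf_winv[OF icf] by simp

lemma rt_prop: "prime p \<Longrightarrow> a \<in> carrier R \<Longrightarrow>
    rt R p a \<in> carrier R \<and> (if alg_char R = p then rt R p a [^] p = a else rt R p a = \<zero>)"
  using icf_rt[OF icf] by simp

lemma wr: "weakly_rooted R" using icf_wr[OF icf] .

lemma winv_eqs:
  assumes a: "a \<in> carrier R"
  shows "a \<otimes> winv R a \<otimes> a = a" "winv R a \<otimes> a \<otimes> winv R a = winv R a"
  using winv_eq[OF a] a field_Units by auto

lemma winv_unique:
  assumes b: "b \<in> carrier R" and X: "X \<in> carrier R"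
    and e1: "b \<otimes> X \<otimes> b = b" and e2: "X \<otimes> b \<otimes> X = X"
  shows "X = winv R b"
proof (cases "b = \<zero>")
  case True
  then show ?thesis using winv_eq[OF b] e2 X by simp
next
  case False
  then have bU: "b \<in> Units R" using b field_Units by simp
  have "b \<otimes> X \<otimes> b = \<one> \<otimes> b" using e1 b by simp
  then have "b \<otimes> X = \<one>" using False b X by (metis m_closed m_rcancel one_closed)
  then have "inv b = X" using b X comm_inv_char by blast
  then show ?thesis using winv_eq[OF b] False by simp
qed

lemma cp_eq:
  assumes p: "prime p"
  shows "cp R (winv R) p = (if alg_char R = p then \<zero> else \<one>)"
proof -
  have nc: "[p] \<cdot> \<one> \<in> carrier R" by simp
  show ?thesis
  proof (cases "alg_char R = p")
    case True
    then have "[p] \<cdot> \<one> = \<zero>" using char_iff[OF wr p] by simp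
    then show ?thesis using True winv_eq[OF nc] unfolding cp_def by simp
  next
    case False
    then have n0: "[p] \<cdot> \<one> \<noteq> \<zero>" using char_iff[OF wr p] by simp
    then have "[p] \<cdot> \<one> \<in> Units R" using field_Units nc by simp
    then show ?thesis using False n0 winv_eq[OF nc] unfolding cp_def by simp
  qed
qed

lemma rt_eqs:
  assumes p: "prime p" and a: "a \<in> carrier R"
  shows "cp R (winv R) p \<otimes> rt R p a = \<zero>"
    "rt R p a [^] p \<oplus> cp R (winv R) p \<otimes> a = a"
proof -
  have r: "rt R p a \<in> carrier R" using rt_prop[OF p a] by blast
  have "p \<noteq> 0" using p by auto
  then have z: "\<zero> [^] p = \<zero>" using nat_pow_zero by metis
  then show "cp R (winv R) p \<otimes> rt R p a = \<zero>"
    "rt R p a [^] p \<oplus> cp R (winv R) p \<otimes> a = a"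
    using cp_eq[OF p] rt_prop[OF p a] r a z by auto
qed

lemma rt_unique:
  assumes p: "prime p" and b: "b \<in> carrier R" and X: "X \<in> carrier R"
    and e1: "cp R (winv R) p \<otimes> X = \<zero>"
    and e2: "X [^] p \<oplus> cp R (winv R) p \<otimes> b = b"
  shows "X = rt R p b"
proof -
  have r: "rt R p b \<in> carrier R" using rt_prop[OF p b] by blast
  show ?thesis
  proof (cases "alg_char R = p")
    case True
    then have c: "[p] \<cdot> \<one> = \<zero>" using char_iff[OF wr p] by simp
    have "X [^] p = b" using e2 cp_eq[OF p] True X b by simp
    also have "b = rt R p b [^] p" using rt_prop[OF p b] True by simp
    finally show ?thesis using frob_inj[OF p c X r] by simp
  next
    case False
    then show ?thesis using e1 cp_eq[OF p] rt_prop[OF p b] X by simp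
  qed
qed

end



lemma ap0[simp]: "add_pow R (0::nat) x = \<zero>\<^bsub>R\<^esub>" by (simp add: add_pow_def)
lemma apS[simp]: "add_pow R (Suc n) x = add_pow R n x \<oplus>\<^bsub>R\<^esub> x" by (simp add: add_pow_def)

locale emb =
  fixes A :: "'a icm_alg" and I :: "'i set" and F :: "'i \<Rightarrow> 'c icm_alg" and e :: "'a \<Rightarrow> 'i \<Rightarrow> 'c"
  assumes alg: "icm_algebra A"
    and fld: "\<forall>i\<in>I. implicitly_closed_field (F i)"
    and hom: "e \<in> icm_hom A (prod_alg I F)"
    and inj: "inj_on e (carrier A)"
begin

lemma Fi: "i \<in> I \<Longrightarrow> icfl (F i)"
  using fld icf_field by (auto intro!: icfl.intro icfl_axioms.intro)

lemma one_c[simp]: "\<one>\<^bsub>A\<^esub> \<in> carrier A" and zero_c[simp]: "\<zero>\<^bsub>A\<^esub> \<in> carrier A"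
  using alg unfolding icm_algebra_def by auto

lemma add_c[simp]: "s \<in> carrier A \<Longrightarrow> t \<in> carrier A \<Longrightarrow> s \<oplus>\<^bsub>A\<^esub> t \<in> carrier A"
  and mult_c[simp]: "s \<in> carrier A \<Longrightarrow> t \<in> carrier A \<Longrightarrow> s \<otimes>\<^bsub>A\<^esub> t \<in> carrier A"
  and winv_c[simp]: "s \<in> carrier A \<Longrightarrow> winv A s \<in> carrier A"
  using alg unfolding icm_algebra_def by auto

lemma rt_c[simp]: "prime p \<Longrightarrow> s \<in> carrier A \<Longrightarrow> rt A p s \<in> carrier A"
  using alg unfolding icm_algebra_def by auto

lemma pow_c[simp]: "s \<in> carrier A \<Longrightarrow> s [^]\<^bsub>A\<^esub> (n::nat) \<in> carrier A"
  by (induction n) auto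

lemma addpow_c[simp]: "add_pow A (n::nat) \<one>\<^bsub>A\<^esub> \<in> carrier A"
  by (induction n) auto

lemma cp_c[simp]: "cp A (winv A) p \<in> carrier A"
  unfolding cp_def by simp

lemma rh: "e \<in> ring_hom A (prod_alg I F)" using hom unfolding icm_hom_def by simp

lemma e_car: "s \<in> carrier A \<Longrightarrow> i \<in> I \<Longrightarrow> e s i \<in> carrier (F i)"
  using rh unfolding ring_hom_def prod_alg_def by (auto simp: PiE_iff)

lemma e_mult[simp]: "s \<in> carrier A \<Longrightarrow> t \<in> carrier A \<Longrightarrow> i \<in> I \<Longrightarrow>
    e (s \<otimes>\<^bsub>A\<^esub> t) i = e s i \<otimes>\<^bsub>F i\<^esub> e t i"
  using rh unfolding ring_hom_def prod_alg_def by auto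

lemma e_add[simp]: "s \<in> carrier A \<Longrightarrow> t \<in> carrier A \<Longrightarrow> i \<in> I \<Longrightarrow>
    e (s \<oplus>\<^bsub>A\<^esub> t) i = e s i \<oplus>\<^bsub>F i\<^esub> e t i"
  using rh unfolding ring_hom_def prod_alg_def by auto

lemma e_one[simp]: "i \<in> I \<Longrightarrow> e \<one>\<^bsub>A\<^esub> i = \<one>\<^bsub>F i\<^esub>"
  using rh unfolding ring_hom_def prod_alg_def by auto

lemma e_zero[simp]: "i \<in> I \<Longrightarrow> e \<zero>\<^bsub>A\<^esub> i = \<zero>\<^bsub>F i\<^esub>"
  using hom unfolding icm_hom_def prod_alg_def by auto

lemma e_winv[simp]: "s \<in> carrier A \<Longrightarrow> i \<in> I \<Longrightarrow> e (winv A s) i = winv (F i) (e s i)"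
  using hom unfolding icm_hom_def prod_alg_def by auto

lemma e_rt[simp]: "prime p \<Longrightarrow> s \<in> carrier A \<Longrightarrow> i \<in> I \<Longrightarrow> e (rt A p s) i = rt (F i) p (e s i)"
  using hom unfolding icm_hom_def prod_alg_def by auto

lemma e_pow[simp]: "s \<in> carrier A \<Longrightarrow> i \<in> I \<Longrightarrow> e (s [^]\<^bsub>A\<^esub> (n::nat)) i = e s i [^]\<^bsub>F i\<^esub> n"
  by (induction n) auto

lemma e_addpow[simp]: "i \<in> I \<Longrightarrow> e (add_pow A (n::nat) \<one>\<^bsub>A\<^esub>) i = add_pow (F i) n \<one>\<^bsub>F i\<^esub>"
  by (induction n) auto

lemma e_cp[simp]: "i \<in> I \<Longrightarrow> e (cp A (winv A) p) i = cp (F i) (winv (F i)) p"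
  unfolding cp_def by simp

lemma ext: "s \<in> carrier A \<Longrightarrow> t \<in> carrier A \<Longrightarrow> (\<And>i. i \<in> I \<Longrightarrow> e s i = e t i) \<Longrightarrow> s = t"
proof -
  assume s: "s \<in> carrier A" and t: "t \<in> carrier A" and c: "\<And>i. i \<in> I \<Longrightarrow> e s i = e t i"
  have "e s \<in> carrier (prod_alg I F)" "e t \<in> carrier (prod_alg I F)"
    using rh s t unfolding ring_hom_def by auto
  then have "e s = e t" using c unfolding prod_alg_def by (auto intro: PiE_ext)
  then show "s = t" using inj s t by (auto dest: inj_onD)
qed

end

lemma ICM_emb: "ICM TYPE('i) TYPE('c) A \<Longrightarrow> \<exists>(I :: 'i set) (F :: 'i \<Rightarrow> 'c icm_alg) e. emb A I F e"
  unfolding ICM_def emb_def by blast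

lemma hom_facts:
  assumes "h \<in> ring_hom A B"
  shows "\<And>x. x \<in> carrier A \<Longrightarrow> h x \<in> carrier B"
    "\<And>x y. x \<in> carrier A \<Longrightarrow> y \<in> carrier A \<Longrightarrow> h (x \<otimes>\<^bsub>A\<^esub> y) = h x \<otimes>\<^bsub>B\<^esub> h y"
    "\<And>x y. x \<in> carrier A \<Longrightarrow> y \<in> carrier A \<Longrightarrow> h (x \<oplus>\<^bsub>A\<^esub> y) = h x \<oplus>\<^bsub>B\<^esub> h y"
    "h \<one>\<^bsub>A\<^esub> = \<one>\<^bsub>B\<^esub>"
  using assms unfolding ring_hom_def by auto

theorem mainTheorem17:
  fixes A :: "'a icm_alg" and B :: "'b icm_alg" and h :: "'a \<Rightarrow> 'b"
  assumes "ICM TYPE('i1) TYPE('c1) A"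
    and "ICM TYPE('i2) TYPE('c2) B"
    and "h \<in> ring_hom A B"
  shows "h \<in> icm_hom A B"
proof -
  obtain IA :: "'i1 set" and FA :: "'i1 \<Rightarrow> 'c1 icm_alg" and eA where "emb A IA FA eA"
    using ICM_emb[OF assms(1)] by blast
  then interpret a: emb A IA FA eA .
  obtain IB :: "'i2 set" and FB :: "'i2 \<Rightarrow> 'c2 icm_alg" and eB where "emb B IB FB eB"
    using ICM_emb[OF assms(2)] by blast
  then interpret b: emb B IB FB eB .
  note hf = hom_facts[OF assms(3)]
  have hc[simp]: "x \<in> carrier A \<Longrightarrow> h x \<in> carrier B" for x using hf(1) .
  have hm[simp]: "x \<in> carrier A \<Longrightarrow> y \<in> carrier A \<Longrightarrow> h (x \<otimes>\<^bsub>A\<^esub> y) = h x \<otimes>\<^bsub>B\<^esub> h y" for x y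
    using hf(2) .
  have ha[simp]: "x \<in> carrier A \<Longrightarrow> y \<in> carrier A \<Longrightarrow> h (x \<oplus>\<^bsub>A\<^esub> y) = h x \<oplus>\<^bsub>B\<^esub> h y" for x y
    using hf(3) .
  have h1[simp]: "h \<one>\<^bsub>A\<^esub> = \<one>\<^bsub>B\<^esub>" using hf(4) .
  have "\<zero>\<^bsub>A\<^esub> \<oplus>\<^bsub>A\<^esub> \<zero>\<^bsub>A\<^esub> = \<zero>\<^bsub>A\<^esub>"
  proof (rule a.ext)
    fix i assume i: "i \<in> IA"
    interpret f: icfl "FA i" using a.Fi[OF i] .
    show "eA (\<zero>\<^bsub>A\<^esub> \<oplus>\<^bsub>A\<^esub> \<zero>\<^bsub>A\<^esub>) i = eA \<zero>\<^bsub>A\<^esub> i" using i by simp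
  qed auto
  then have hz0: "h \<zero>\<^bsub>A\<^esub> \<oplus>\<^bsub>B\<^esub> h \<zero>\<^bsub>A\<^esub> = h \<zero>\<^bsub>A\<^esub>" using ha[of "\<zero>\<^bsub>A\<^esub>" "\<zero>\<^bsub>A\<^esub>"] by simp
  have hz[simp]: "h \<zero>\<^bsub>A\<^esub> = \<zero>\<^bsub>B\<^esub>"
  proof (rule b.ext)
    fix i assume i: "i \<in> IB"
    interpret f: icfl "FB i" using b.Fi[OF i] .
    have u: "eB (h \<zero>\<^bsub>A\<^esub>) i \<in> carrier (FB i)" using b.e_car[OF _ i] by simp
    have "eB (h \<zero>\<^bsub>A\<^esub>) i \<oplus>\<^bsub>FB i\<^esub> eB (h \<zero>\<^bsub>A\<^esub>) i = eB (h \<zero>\<^bsub>A\<^esub>) i"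
      using arg_cong[OF hz0, of "\<lambda>x. eB x i"] i by simp
    then show "eB (h \<zero>\<^bsub>A\<^esub>) i = eB \<zero>\<^bsub>B\<^esub> i" using u i
      by (metis f.add.l_cancel_one' f.zero_closed f.r_zero b.e_zero)
  qed auto
  have hw: "h (winv A x) = winv B (h x)" if x: "x \<in> carrier A" for x
  proof -
    define w where "w = winv A x"
    have wc: "w \<in> carrier A" unfolding w_def using x by simp
    have e1: "x \<otimes>\<^bsub>A\<^esub> w \<otimes>\<^bsub>A\<^esub> x = x"
    proof (rule a.ext)
      fix i assume i: "i \<in> IA"
      interpret f: icfl "FA i" using a.Fi[OF i] .
      show "eA (x \<otimes>\<^bsub>A\<^esub> w \<otimes>\<^bsub>A\<^esub> x) i = eA x i"
        using i x wc f.winv_eqs(1)[OF a.e_car[OF x i]] unfolding w_def by simp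
    qed (use x wc in auto)
    have e2: "w \<otimes>\<^bsub>A\<^esub> x \<otimes>\<^bsub>A\<^esub> w = w"
    proof (rule a.ext)
      fix i assume i: "i \<in> IA"
      interpret f: icfl "FA i" using a.Fi[OF i] .
      show "eA (w \<otimes>\<^bsub>A\<^esub> x \<otimes>\<^bsub>A\<^esub> w) i = eA w i"
        using i x wc f.winv_eqs(2)[OF a.e_car[OF x i]] unfolding w_def by simp
    qed (use x wc in auto)
    have f1: "h x \<otimes>\<^bsub>B\<^esub> h w \<otimes>\<^bsub>B\<^esub> h x = h x" using arg_cong[OF e1, of h] x wc by simp
    have f2: "h w \<otimes>\<^bsub>B\<^esub> h x \<otimes>\<^bsub>B\<^esub> h w = h w" using arg_cong[OF e2, of h] x wc by simp
    show ?thesis unfolding w_def[symmetric]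
    proof (rule b.ext)
      fix i assume i: "i \<in> IB"
      interpret f: icfl "FB i" using b.Fi[OF i] .
      have u: "eB (h x) i \<in> carrier (FB i)" "eB (h w) i \<in> carrier (FB i)"
        using b.e_car[OF _ i] x wc by auto
      show "eB (h w) i = eB (winv B (h x)) i"
        using f.winv_unique[OF u] arg_cong[OF f1, of "\<lambda>y. eB y i"] arg_cong[OF f2, of "\<lambda>y. eB y i"] i x wc
        by simp
    qed (use x wc in auto)
  qed
  have hap: "h (add_pow A n \<one>\<^bsub>A\<^esub>) = add_pow B n \<one>\<^bsub>B\<^esub>" for n :: nat
    by (induction n) auto
  have hcp: "h (cp A (winv A) p) = cp B (winv B) p" for p
    unfolding cp_def using hap hw by simp
  have hpow: "h (x [^]\<^bsub>A\<^esub> n) = h x [^]\<^bsub>B\<^esub> n" if "x \<in> carrier A" for x and n :: nat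
    using that by (induction n) auto
  have hr: "h (rt A p x) = rt B p (h x)" if p: "prime p" and x: "x \<in> carrier A" for p x
  proof -
    define r where "r = rt A p x"
    define c where "c = cp A (winv A) p"
    have rc: "r \<in> carrier A" unfolding r_def using p x by simp
    have cc: "c \<in> carrier A" unfolding c_def by simp
    have e1: "c \<otimes>\<^bsub>A\<^esub> r = \<zero>\<^bsub>A\<^esub>"
    proof (rule a.ext)
      fix i assume i: "i \<in> IA"
      interpret f: icfl "FA i" using a.Fi[OF i] .
      show "eA (c \<otimes>\<^bsub>A\<^esub> r) i = eA \<zero>\<^bsub>A\<^esub> i"
        using i x rc cc p f.rt_eqs(1)[OF p a.e_car[OF x i]] unfolding r_def c_def by simp
    qed (use rc cc in auto)
    have e2: "r [^]\<^bsub>A\<^esub> p \<oplus>\<^bsub>A\<^esub> c \<otimes>\<^bsub>A\<^esub> x = x"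
    proof (rule a.ext)
      fix i assume i: "i \<in> IA"
      interpret f: icfl "FA i" using a.Fi[OF i] .
      show "eA (r [^]\<^bsub>A\<^esub> p \<oplus>\<^bsub>A\<^esub> c \<otimes>\<^bsub>A\<^esub> x) i = eA x i"
        using i x rc cc p f.rt_eqs(2)[OF p a.e_car[OF x i]] unfolding r_def c_def by simp
    qed (use rc cc x in auto)
    have f1: "cp B (winv B) p \<otimes>\<^bsub>B\<^esub> h r = \<zero>\<^bsub>B\<^esub>"
      using arg_cong[OF e1, of h] rc cc hcp unfolding c_def by simp
    have f2: "h r [^]\<^bsub>B\<^esub> p \<oplus>\<^bsub>B\<^esub> cp B (winv B) p \<otimes>\<^bsub>B\<^esub> h x = h x"
      using arg_cong[OF e2, of h] rc cc x hcp hpow unfolding c_def by simp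
    show ?thesis unfolding r_def[symmetric]
    proof (rule b.ext)
      fix i assume i: "i \<in> IB"
      interpret f: icfl "FB i" using b.Fi[OF i] .
      have u: "eB (h x) i \<in> carrier (FB i)" "eB (h r) i \<in> carrier (FB i)"
        using b.e_car[OF _ i] x rc by auto
      show "eB (h r) i = eB (rt B p (h x)) i"
        using f.rt_unique[OF p u] arg_cong[OF f1, of "\<lambda>y. eB y i"] arg_cong[OF f2, of "\<lambda>y. eB y i"] i x rc p
        by simp
    qed (use x rc p in auto)
  qed
  show ?thesis unfolding icm_hom_def using assms(3) hw hr hz by blast
qed


end
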